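(* Let $\Omega_1,\dots,\Omega_k$ be pairwise disjoint non-empty subsets of $\{1,\dots,n\}$, let $G_i\leq\mathrm{Sym}(\Omega_i)$, and let $G=G_1\cdot G_2\cdots G_k$ be their internal direct product, acting on $\Omega=\Omega_1\cup\cdots\cup\Omega_k$ by $x^{g_1\cdots g_k}=x^{g_i}$ for $x\in\Omega_i$. If every $G_i$ (with its action on $\Omega_i$) has the EKR property, then $G$ (with its action on $\Omega$) has the EKR property.
   Context: The internal direct product consists of the products $g_1g_2\cdots g_k$ with $g_i\in G_i$, with multiplication $(g_1\cdots g_k)(h_1\cdots h_k)=(g_1h_1)\cdots(g_kh_k)$. For a permutation group acting on a finite set: two elements $\pi,\tau$ intersect if $\pi\tau^{-1}$ has a fixed point. A subset is intersecting if every pair of its elements intersect. A group has the EKR property if every intersecting subset has size at most the size of the largest point-stabilizer. *)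

theory Defs
  imports "HOL-Combinatorics.Permutations"
begin

definition perm_group_on :: "'a set \<Rightarrow> ('a \<Rightarrow> 'a) set \<Rightarrow> bool" where
  "perm_group_on X G \<longleftrightarrow> (\<forall>g\<in>G. g permutes X) \<and> id \<in> G \<and>
     (\<forall>g\<in>G. \<forall>h\<in>G. g \<circ> h \<in> G) \<and> (\<forall>g\<in>G. inv g \<in> G)"

definition intersecting :: "'a set \<Rightarrow> ('a \<Rightarrow> 'a) set \<Rightarrow> bool" where
  "intersecting X S \<longleftrightarrow> (\<forall>p\<in>S. \<forall>t\<in>S. \<exists>x\<in>X. (p \<circ> inv t) x = x)"

definition stabilizer :: "('a \<Rightarrow> 'a) set \<Rightarrow> 'a \<Rightarrow> ('a \<Rightarrow> 'a) set" where
  "stabilizer G x = {g \<in> G. g x = x}"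

definition EKR :: "'a set \<Rightarrow> ('a \<Rightarrow> 'a) set \<Rightarrow> bool" where
  "EKR X G \<longleftrightarrow> (\<forall>S. S \<subseteq> G \<and> intersecting X S \<longrightarrow>
     card S \<le> Max ((\<lambda>x. card (stabilizer G x)) ` X))"

definition internal_dprod :: "nat \<Rightarrow> (nat \<Rightarrow> ('a \<Rightarrow> 'a) set) \<Rightarrow> ('a \<Rightarrow> 'a) set" where
  "internal_dprod k G = {foldr (\<circ>) (map f [0..<k]) id | f. \<forall>i<k. f i \<in> G i}"

end

theory Submission
  imports Defs
begin


definition meet :: "'a set \<Rightarrow> ('a \<Rightarrow> 'a) \<Rightarrow> ('a \<Rightarrow> 'a) \<Rightarrow> bool" where
  "meet X a b \<longleftrightarrow> (\<exists>x\<in>X. a x = b x)"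

lemma meet_sym: "meet X a b = meet X b a"
  unfolding meet_def by (metis)

lemma fix_iff_meet:
  assumes "a permutes X" "b permutes X"
  shows "(\<exists>x\<in>X. (a \<circ> inv b) x = x) \<longleftrightarrow> meet X a b"
proof
  assume "\<exists>x\<in>X. (a \<circ> inv b) x = x"
  then obtain y where y: "y \<in> X" "a (inv b y) = y" by auto
  have "inv b y \<in> X" using y(1) permutes_in_image[OF permutes_inv[OF assms(2)]] by simp
  moreover have "b (inv b y) = y" using permutes_inverses[OF assms(2)] by simp
  ultimately show "meet X a b" unfolding meet_def using y by metis
next
  assume "meet X a b"
  then obtain x where x: "x \<in> X" "a x = b x" unfolding meet_def by auto
  have "b x \<in> X" using x(1) permutes_in_image[OF assms(2)] by simp
  moreover have "inv b (b x) = x" using permutes_inverses[OF assms(2)] by simp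
  ultimately show "\<exists>x\<in>X. (a \<circ> inv b) x = x" using x by (metis comp_apply)
qed

lemma intersecting_meet:
  assumes "\<forall>g\<in>S. g permutes X"
  shows "intersecting X S \<longleftrightarrow> (\<forall>p\<in>S. \<forall>t\<in>S. meet X p t)"
  unfolding intersecting_def using fix_iff_meet assms by blast

lemma meet_right:
  assumes "g permutes X"
  shows "meet X (a \<circ> g) (b \<circ> g) = meet X a b"
proof
  assume "meet X (a \<circ> g) (b \<circ> g)"
  then obtain x where "x \<in> X" "a (g x) = b (g x)" unfolding meet_def by auto
  moreover have "g x \<in> X" using \<open>x \<in> X\<close> permutes_in_image[OF assms] by simp
  ultimately show "meet X a b" unfolding meet_def by auto
next
  assume "meet X a b"
  then obtain y where y: "y \<in> X" "a y = b y" unfolding meet_def by auto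
  have "inv g y \<in> X" using y(1) permutes_in_image[OF permutes_inv[OF assms]] by simp
  moreover have "g (inv g y) = y" using permutes_inverses[OF assms] by simp
  ultimately show "meet X (a \<circ> g) (b \<circ> g)" unfolding meet_def using y by (metis comp_apply)
qed

lemma card_indicator: "finite Y \<Longrightarrow> card (Y \<inter> Z) = (\<Sum>y\<in>Y. if y \<in> Z then 1 else (0::nat))"
  by (simp add: sum.If_cases Int_def)

lemma double_count:
  assumes grp: "perm_group_on X A" and JA: "J \<subseteq> A" and YA: "Y \<subseteq> A" and fin: "finite A"
  shows "(\<Sum>g\<in>A. card ((\<lambda>j. j \<circ> g) ` J \<inter> Y)) = card J * card Y"
proof -
  have perm: "\<And>g. g \<in> A \<Longrightarrow> g permutes X" using grp unfolding perm_group_on_def by auto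
  have comp: "\<And>g h. g \<in> A \<Longrightarrow> h \<in> A \<Longrightarrow> g \<circ> h \<in> A" using grp unfolding perm_group_on_def by auto
  have invA: "\<And>g. g \<in> A \<Longrightarrow> inv g \<in> A" using grp unfolding perm_group_on_def by auto
  have finY: "finite Y" using YA fin finite_subset by auto
  have finJ: "finite J" using JA fin finite_subset by auto
  have "(\<Sum>g\<in>A. card ((\<lambda>j. j \<circ> g) ` J \<inter> Y)) =
        (\<Sum>g\<in>A. \<Sum>y\<in>Y. if y \<in> (\<lambda>j. j \<circ> g) ` J then 1 else (0::nat))"
    by (rule sum.cong[OF refl]) (simp add: card_indicator[OF finY] Int_commute)
  also have "\<dots> = (\<Sum>y\<in>Y. \<Sum>g\<in>A. if y \<in> (\<lambda>j. j \<circ> g) ` J then 1 else (0::nat))"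
    by (rule sum.swap)
  also have "\<dots> = (\<Sum>y\<in>Y. card J)"
  proof (rule sum.cong[OF refl])
    fix y assume yY: "y \<in> Y"
    hence yA: "y \<in> A" using YA by auto
    have eq: "{g \<in> A. y \<in> (\<lambda>j. j \<circ> g) ` J} = (\<lambda>j. inv j \<circ> y) ` J"
    proof (rule set_eqI, rule iffI)
      fix g assume "g \<in> {g \<in> A. y \<in> (\<lambda>j. j \<circ> g) ` J}"
      then obtain j where j: "j \<in> J" "y = j \<circ> g" by auto
      have "inv j \<circ> y = g" using j permutes_inv_o(2)[OF perm] JA
        by (metis comp_assoc id_comp subsetD)
      thus "g \<in> (\<lambda>j. inv j \<circ> y) ` J" using j(1) by (metis image_eqI)
    next
      fix g assume "g \<in> (\<lambda>j. inv j \<circ> y) ` J"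
      then obtain j where j: "j \<in> J" "g = inv j \<circ> y" by auto
      have jA: "j \<in> A" using j JA by auto
      have "j \<circ> g = y" using j permutes_inv_o(1)[OF perm[OF jA]]
        by (metis comp_assoc id_comp)
      moreover have "g \<in> A" using j jA yA comp invA by auto
      ultimately show "g \<in> {g \<in> A. y \<in> (\<lambda>j. j \<circ> g) ` J}" using j by force
    qed
    have inj: "inj_on (\<lambda>j. inv j \<circ> y) J"
    proof (rule inj_onI)
      fix j j' assume jj: "j \<in> J" "j' \<in> J" "inv j \<circ> y = inv j' \<circ> y"
      hence "inv j \<circ> y \<circ> inv y = inv j' \<circ> y \<circ> inv y" by simp
      hence "inv j = inv j'" using permutes_inv_o(1)[OF perm[OF yA]] by (simp add: comp_assoc)
      thus "j = j'" using jj JA perm by (metis inv_inv_eq permutes_bij subsetD)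
    qed
    have "(\<Sum>g\<in>A. if y \<in> (\<lambda>j. j \<circ> g) ` J then 1 else (0::nat)) = card {g \<in> A. y \<in> (\<lambda>j. j \<circ> g) ` J}"
      using fin by (simp add: sum.If_cases Int_def)
    also have "\<dots> = card J" using eq inj card_image by metis
    finally show "(\<Sum>g\<in>A. if y \<in> (\<lambda>j. j \<circ> g) ` J then 1 else (0::nat)) = card J" .
  qed
  also have "\<dots> = card J * card Y" by simp
  finally show ?thesis .
qed

lemma perm_group_finite:
  assumes "perm_group_on X A" "finite X"
  shows "finite A"
  using assms finite_permutations[OF assms(2)] unfolding perm_group_on_def
  by (metis (no_types, lifting) mem_Collect_eq rev_finite_subset subsetI)

lemma neighbor:
  assumes grp: "perm_group_on X A" and ekr: "EKR X A" and finX: "finite X" and ne: "X \<noteq> {}"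
    and IA: "I \<subseteq> A" and Ii: "\<forall>a\<in>I. \<forall>a'\<in>I. meet X a a'"
  shows "card I * card A \<le> Max ((\<lambda>x. card (stabilizer A x)) ` X) *
           (card I + card {a'\<in>A. \<exists>a\<in>I. \<not> meet X a a'})"
proof -
  define sA where "sA = Max ((\<lambda>x. card (stabilizer A x)) ` X)"
  define N where "N = {a'\<in>A. \<exists>a\<in>I. \<not> meet X a a'}"
  have perm: "\<And>g. g \<in> A \<Longrightarrow> g permutes X" using grp unfolding perm_group_on_def by auto
  have comp: "\<And>g h. g \<in> A \<Longrightarrow> h \<in> A \<Longrightarrow> g \<circ> h \<in> A" using grp unfolding perm_group_on_def by auto
  have finA: "finite A" using perm_group_finite[OF grp finX] .
  have "sA \<in> (\<lambda>x. card (stabilizer A x)) ` X" unfolding sA_def using finX ne by (intro Max_in) auto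
  then obtain x0 where x0: "x0 \<in> X" "card (stabilizer A x0) = sA" by auto
  define J where "J = stabilizer A x0"
  have JA: "J \<subseteq> A" unfolding J_def stabilizer_def by auto
  have finJ: "finite J" using JA finA finite_subset by auto
  have finI: "finite I" using IA finA finite_subset by auto
  have finN: "finite N" using finA unfolding N_def by auto
  define Y where "Y = I \<union> N"
  have YA: "Y \<subseteq> A" unfolding Y_def N_def using IA by auto
  have IN: "I \<inter> N = {}" unfolding N_def using Ii by auto
  have cardY: "card Y = card I + card N" unfolding Y_def using IN finI finN card_Un_disjoint by blast
  have key: "card I \<le> card ((\<lambda>j. j \<circ> g) ` J \<inter> Y)" if gA: "g \<in> A" for g
  proof -
    define Jg where "Jg = (\<lambda>j. j \<circ> g) ` J"
    define K where "K = (Jg - Y) \<union> I"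
    have JgA: "Jg \<subseteq> A" unfolding Jg_def using JA comp gA by auto
    have KA: "K \<subseteq> A" unfolding K_def using JgA IA by auto
    have Kperm: "\<forall>g\<in>K. g permutes X" using KA perm by auto
    have Jmeet: "\<forall>u\<in>Jg. \<forall>v\<in>Jg. meet X u v"
    proof (intro ballI)
      fix u v assume "u \<in> Jg" "v \<in> Jg"
      then obtain j j' where jj: "j \<in> J" "j' \<in> J" "u = j \<circ> g" "v = j' \<circ> g" unfolding Jg_def by auto
      have "j x0 = x0" "j' x0 = x0" using jj unfolding J_def stabilizer_def by auto
      hence "meet X j j'" unfolding meet_def using x0(1) by metis
      thus "meet X u v" using jj meet_right[OF perm[OF gA]] by simp
    qed
    have "\<forall>p\<in>K. \<forall>t\<in>K. meet X p t"
    proof (intro ballI)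
      fix p t assume pt: "p \<in> K" "t \<in> K"
      show "meet X p t"
      proof (cases "p \<in> I")
        case True
        show ?thesis
        proof (cases "t \<in> I")
          case True thus ?thesis using \<open>p \<in> I\<close> Ii by auto
        next
          case False
          hence "t \<in> Jg" "t \<notin> N" using pt unfolding K_def Y_def by auto
          thus ?thesis using \<open>p \<in> I\<close> JgA unfolding N_def by auto
        qed
      next
        case False
        hence p: "p \<in> Jg" "p \<notin> N" using pt unfolding K_def Y_def by auto
        show ?thesis
        proof (cases "t \<in> I")
          case True
          thus ?thesis using p JgA meet_sym unfolding N_def by blast
        next
          case False
          hence "t \<in> Jg" using pt unfolding K_def Y_def by auto
          thus ?thesis using p Jmeet by auto
        qed
      qed
    qed
    hence "intersecting X K" using intersecting_meet[OF Kperm] by auto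
    hence c1: "card K \<le> sA" using ekr KA unfolding EKR_def sA_def by auto
    have finJg: "finite Jg" unfolding Jg_def using finJ by auto
    have "card K = card (Jg - Y) + card I" unfolding K_def
      using finJg finI card_Un_disjoint[of "Jg - Y" I] unfolding Y_def by auto
    moreover have "card Jg = card (Jg - Y) + card (Jg \<inter> Y)"
    proof -
      have "Jg = (Jg - Y) \<union> (Jg \<inter> Y)" by blast
      moreover have "(Jg - Y) \<inter> (Jg \<inter> Y) = {}" by blast
      ultimately show ?thesis using finJg card_Un_disjoint[of "Jg - Y" "Jg \<inter> Y"] by simp
    qed
    moreover have "card Jg = card J"
    proof -
      have "inj_on (\<lambda>j. j \<circ> g) J"
      proof (rule inj_onI)
        fix j j' assume "j \<circ> g = j' \<circ> g"
        hence "j \<circ> g \<circ> inv g = j' \<circ> g \<circ> inv g" by simp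
        thus "j = j'" using permutes_inv_o(1)[OF perm[OF gA]] by (simp add: comp_assoc)
      qed
      thus ?thesis unfolding Jg_def by (rule card_image)
    qed
    ultimately show ?thesis using c1 x0(2) unfolding J_def Jg_def by linarith
  qed
  have "card A * card I = (\<Sum>g\<in>A. card I)" by simp
  also have "\<dots> \<le> (\<Sum>g\<in>A. card ((\<lambda>j. j \<circ> g) ` J \<inter> Y))" by (rule sum_mono) (rule key)
  also have "\<dots> = card J * card Y" by (rule double_count[OF grp JA YA finA])
  finally have "card A * card I \<le> sA * (card I + card N)" using x0(2) cardY unfolding J_def by simp
  thus ?thesis unfolding sA_def N_def by (simp add: mult.commute)
qed



lemma card_fiber2:
  assumes finB: "finite B" and finW: "finite W" and WB: "W \<subseteq> A \<times> B"
  shows "card W = (\<Sum>b\<in>B. card {a. (a,b) \<in> W})"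
proof -
  have eq: "W = (\<lambda>(b,a). (a,b)) ` (SIGMA b:B. {a. (a,b) \<in> W})" using WB by force
  have inj: "inj_on (\<lambda>(b,a). (a,b)) (SIGMA b:B. {a. (a,b) \<in> W})" by (auto simp: inj_on_def)
  have fin: "\<forall>b\<in>B. finite {a. (a,b) \<in> W}"
  proof
    fix b
    have "{a. (a,b) \<in> W} \<subseteq> fst ` W" by force
    thus "finite {a. (a,b) \<in> W}" using finW finite_subset by blast
  qed
  have "card W = card (SIGMA b:B. {a. (a,b) \<in> W})" using card_image[OF inj] eq by simp
  also have "\<dots> = (\<Sum>b\<in>B. card {a. (a,b) \<in> W})" using card_SigmaI[OF finB fin] .
  finally show ?thesis .
qed

lemma side:
  fixes S :: "('a \<times> 'b) set" and m :: "'a \<Rightarrow> 'a \<Rightarrow> bool"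
  assumes finA: "finite A" and finB: "finite B" and SAB: "S \<subseteq> A \<times> B"
    and nb: "\<And>I. I \<subseteq> A \<Longrightarrow> (\<forall>a\<in>I. \<forall>a'\<in>I. m a a') \<Longrightarrow>
               card I * card A \<le> s * (card I + card {a'\<in>A. \<exists>a\<in>I. \<not> m a a'})"
  shows "card {(a,b)\<in>S. \<forall>a'. (a',b)\<in>S \<longrightarrow> m a a'} * card A \<le>
         s * (card {(a,b)\<in>S. \<forall>a'. (a',b)\<in>S \<longrightarrow> m a a'} +
              card {(a',b)\<in>A\<times>B. \<exists>a. (a,b)\<in>S \<and> (\<forall>a''. (a'',b)\<in>S \<longrightarrow> m a a'') \<and> \<not> m a a'})"
proof -
  define P where "P = {(a,b)\<in>S. \<forall>a'. (a',b)\<in>S \<longrightarrow> m a a'}"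
  define XA where "XA = {(a',b)\<in>A\<times>B. \<exists>a. (a,b)\<in>S \<and> (\<forall>a''. (a'',b)\<in>S \<longrightarrow> m a a'') \<and> \<not> m a a'}"
  have finAB: "finite (A \<times> B)" using finA finB by auto
  have PAB: "P \<subseteq> A \<times> B" using SAB unfolding P_def by auto
  have XAB: "XA \<subseteq> A \<times> B" unfolding XA_def by auto
  have cP: "card P = (\<Sum>b\<in>B. card {a. (a,b) \<in> P})"
    by (rule card_fiber2[OF finB finite_subset[OF PAB finAB] PAB])
  have cX: "card XA = (\<Sum>b\<in>B. card {a. (a,b) \<in> XA})"
    by (rule card_fiber2[OF finB finite_subset[OF XAB finAB] XAB])
  have each: "card {a. (a,b) \<in> P} * card A \<le> s * (card {a. (a,b) \<in> P} + card {a. (a,b) \<in> XA})"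
    if bB: "b \<in> B" for b
  proof -
    define I where "I = {a. (a,b) \<in> P}"
    have IA: "I \<subseteq> A" unfolding I_def using PAB by auto
    have Ii: "\<forall>a\<in>I. \<forall>a'\<in>I. m a a'" unfolding I_def P_def by auto
    have "{a. (a,b) \<in> XA} = {a'\<in>A. \<exists>a\<in>I. \<not> m a a'}"
      unfolding XA_def I_def P_def using bB by auto
    thus ?thesis using nb[OF IA Ii] unfolding I_def by simp
  qed
  have "card P * card A = (\<Sum>b\<in>B. card {a. (a,b) \<in> P} * card A)" using cP by (simp add: sum_distrib_right)
  also have "\<dots> \<le> (\<Sum>b\<in>B. s * (card {a. (a,b) \<in> P} + card {a. (a,b) \<in> XA}))"
    by (rule sum_mono) (rule each)
  also have "\<dots> = s * (card P + card XA)" unfolding cP cX sum.distrib[symmetric] sum_distrib_left by simp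
  finally show ?thesis unfolding P_def XA_def .
qed

lemma arith_final:
  fixes s p q xa xb N m :: nat
  assumes h1: "p * N \<le> m * (p + xa)" and h2: "q * N \<le> m * (q + xb)"
    and h3: "s \<le> p + q" and h4: "s + xa + xb \<le> N" and h5: "m \<le> N"
  shows "s \<le> m"
proof -
  have "int p * int N \<le> int m * (int p + int xa)" using h1 by (metis of_nat_add of_nat_le_iff of_nat_mult)
  moreover have "int q * int N \<le> int m * (int q + int xb)" using h2 by (metis of_nat_add of_nat_le_iff of_nat_mult)
  ultimately have a: "(int p + int q) * int N \<le> int m * (int p + int q) + int m * (int xa + int xb)"
    by (simp add: algebra_simps)
  have "int m * (int xa + int xb) \<le> int m * (int N - int s)" using h4 by (intro mult_left_mono) auto
  with a have b: "(int p + int q) * (int N - int m) \<le> int m * (int N - int s)" by (simp add: algebra_simps)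
  have "int s * (int N - int m) \<le> (int p + int q) * (int N - int m)"
    using h3 h5 by (intro mult_right_mono) auto
  with b have "int s * int N \<le> int m * int N" by (simp add: algebra_simps)
  hence "s * N \<le> m * N" by (metis of_nat_le_iff of_nat_mult)
  moreover have "N = 0 \<Longrightarrow> s = 0" using h4 by simp
  ultimately show ?thesis by (metis mult_le_cancel2 not_gr0 zero_le)
qed

lemma prod_count:
  fixes S :: "('a \<times> 'b) set"
  assumes finA: "finite A" and finB: "finite B" and SAB: "S \<subseteq> A \<times> B"
    and symA: "\<And>x y. mA x y = mA y x" and symB: "\<And>x y. mB x y = mB y x"
    and prp: "\<And>a b a' b'. (a,b) \<in> S \<Longrightarrow> (a',b') \<in> S \<Longrightarrow> mA a a' \<or> mB b b'"
    and nbA: "\<And>I. I \<subseteq> A \<Longrightarrow> (\<forall>a\<in>I. \<forall>a'\<in>I. mA a a') \<Longrightarrow>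
               card I * card A \<le> sA * (card I + card {a'\<in>A. \<exists>a\<in>I. \<not> mA a a'})"
    and nbB: "\<And>I. I \<subseteq> B \<Longrightarrow> (\<forall>a\<in>I. \<forall>a'\<in>I. mB a a') \<Longrightarrow>
               card I * card B \<le> sB * (card I + card {a'\<in>B. \<exists>a\<in>I. \<not> mB a a'})"
    and sAl: "sA \<le> card A" and sBl: "sB \<le> card B"
  shows "card S \<le> max (sA * card B) (sB * card A)"
proof -
  define P where "P = {(a,b)\<in>S. \<forall>a'. (a',b)\<in>S \<longrightarrow> mA a a'}"
  define XA where "XA = {(a',b)\<in>A\<times>B. \<exists>a. (a,b)\<in>S \<and> (\<forall>a''. (a'',b)\<in>S \<longrightarrow> mA a a'') \<and> \<not> mA a a'}"
  define Q where "Q = {(a,b)\<in>S. \<forall>b'. (a,b')\<in>S \<longrightarrow> mB b b'}"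
  define XB where "XB = {(a,b')\<in>A\<times>B. \<exists>b. (a,b)\<in>S \<and> (\<forall>b''. (a,b'')\<in>S \<longrightarrow> mB b b'') \<and> \<not> mB b b'}"
  have finAB: "finite (A \<times> B)" using finA finB by auto
  have sideA: "card P * card A \<le> sA * (card P + card XA)"
    unfolding P_def XA_def by (rule side[OF finA finB SAB nbA])
  define S' where "S' = (\<lambda>(a,b). (b,a)) ` S"
  have S'BA: "S' \<subseteq> B \<times> A" unfolding S'_def using SAB by auto
  have sideB0: "card {(b,a)\<in>S'. \<forall>b'. (b',a)\<in>S' \<longrightarrow> mB b b'} * card B \<le>
         sB * (card {(b,a)\<in>S'. \<forall>b'. (b',a)\<in>S' \<longrightarrow> mB b b'} +
              card {(b',a)\<in>B\<times>A. \<exists>b. (b,a)\<in>S' \<and> (\<forall>b''. (b'',a)\<in>S' \<longrightarrow> mB b b'') \<and> \<not> mB b b'})"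
    by (rule side[OF finB finA S'BA nbB])
  have swinj: "\<And>Z. inj_on (\<lambda>(a,b). (b,a)) Z" by (auto simp: inj_on_def)
  have e1: "{(b,a)\<in>S'. \<forall>b'. (b',a)\<in>S' \<longrightarrow> mB b b'} = (\<lambda>(a,b). (b,a)) ` Q"
    unfolding S'_def Q_def by force
  have e2: "{(b',a)\<in>B\<times>A. \<exists>b. (b,a)\<in>S' \<and> (\<forall>b''. (b'',a)\<in>S' \<longrightarrow> mB b b'') \<and> \<not> mB b b'} = (\<lambda>(a,b). (b,a)) ` XB"
    unfolding S'_def XB_def by force
  have sideB: "card Q * card B \<le> sB * (card Q + card XB)"
    using sideB0 unfolding e1 e2 card_image[OF swinj] .
  have SPQ: "S \<subseteq> P \<union> Q"
  proof
    fix x assume xS: "x \<in> S"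
    obtain a b where x: "x = (a,b)" by force
    show "x \<in> P \<union> Q"
    proof (rule ccontr)
      assume "x \<notin> P \<union> Q"
      then obtain a' b' where "(a',b) \<in> S" "\<not> mA a a'" "(a,b') \<in> S" "\<not> mB b b'"
        using xS unfolding x P_def Q_def by auto
      thus False using prp[of a' b a b'] symA by auto
    qed
  qed
  have finP: "finite P" "finite Q" using SAB finAB unfolding P_def Q_def
    by (auto intro: finite_subset)
  have cS: "card S \<le> card P + card Q"
    using card_mono[OF _ SPQ] finP card_Un_le[of P Q] by auto
  have d1: "S \<inter> XA = {}" unfolding XA_def by auto
  have d2: "S \<inter> XB = {}" unfolding XB_def by auto
  have d3: "XA \<inter> XB = {}"
  proof (rule ccontr)
    assume "XA \<inter> XB \<noteq> {}"
    then obtain x y where "(x,y) \<in> XA" "(x,y) \<in> XB" by auto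
    then obtain a b where "(a,y) \<in> S" "\<not> mA a x" "(x,b) \<in> S" "\<not> mB b y"
      unfolding XA_def XB_def by auto
    thus False using prp[of a y x b] symB by auto
  qed
  have sub: "S \<union> XA \<union> XB \<subseteq> A \<times> B" using SAB unfolding XA_def XB_def by auto
  have finX: "finite XA" "finite XB" "finite S" using sub finAB by (auto intro: finite_subset)
  have "card S + card XA + card XB = card (S \<union> XA \<union> XB)"
    using d1 d2 d3 finX by (simp add: card_Un_disjoint Int_Un_distrib2)
  also have "\<dots> \<le> card A * card B" using card_mono[OF finAB sub] by (simp add: card_cartesian_product)
  finally have c4: "card S + card XA + card XB \<le> card A * card B" .
  define M where "M = max (sA * card B) (sB * card A)"
  have h1: "card P * (card A * card B) \<le> M * (card P + card XA)"
  proof -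
    have "card P * (card A * card B) = (card P * card A) * card B" by simp
    also have "\<dots> \<le> sA * (card P + card XA) * card B" using sideA by simp
    also have "\<dots> = (sA * card B) * (card P + card XA)" by simp
    also have "\<dots> \<le> M * (card P + card XA)" unfolding M_def by (intro mult_right_mono) auto
    finally show ?thesis .
  qed
  have h2: "card Q * (card A * card B) \<le> M * (card Q + card XB)"
  proof -
    have "card Q * (card A * card B) = (card Q * card B) * card A" by simp
    also have "\<dots> \<le> sB * (card Q + card XB) * card A" using sideB by simp
    also have "\<dots> = (sB * card A) * (card Q + card XB)" by simp
    also have "\<dots> \<le> M * (card Q + card XB)" unfolding M_def by (intro mult_right_mono) auto
    finally show ?thesis .
  qed
  have h5: "M \<le> card A * card B" unfolding M_def using sAl sBl
    by (simp add: mult_right_mono)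
  show ?thesis using arith_final[OF h1 h2 cS c4 h5] unfolding M_def .
qed



definition prodset :: "('a \<Rightarrow> 'a) set \<Rightarrow> ('a \<Rightarrow> 'a) set \<Rightarrow> ('a \<Rightarrow> 'a) set" where
  "prodset A B = {a \<circ> b | a b. a \<in> A \<and> b \<in> B}"

lemma prod_apply1:
  assumes "a permutes X" "b permutes Y" "X \<inter> Y = {}" "z \<in> X"
  shows "(a \<circ> b) z = a z"
proof -
  have "z \<notin> Y" using assms by auto
  thus ?thesis using permutes_not_in[OF assms(2)] by simp
qed

lemma prod_apply2:
  assumes "a permutes X" "b permutes Y" "X \<inter> Y = {}" "z \<notin> X"
  shows "(a \<circ> b) z = b z"
proof (cases "z \<in> Y")
  case True
  hence "b z \<in> Y" using permutes_in_image[OF assms(2)] by simp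
  hence "b z \<notin> X" using assms(3) by auto
  thus ?thesis using permutes_not_in[OF assms(1)] by simp
next
  case False
  thus ?thesis using permutes_not_in[OF assms(1)] permutes_not_in[OF assms(2)] assms(4) by simp
qed

lemma prod_commute:
  assumes "a permutes X" "b permutes Y" "X \<inter> Y = {}"
  shows "a \<circ> b = b \<circ> a"
proof
  fix z
  have ba: "(b \<circ> a) z = (a \<circ> b) z"
  proof (cases "z \<in> X")
    case True
    hence "z \<notin> Y" using assms(3) by auto
    thus ?thesis using prod_apply2[OF assms(2,1) _ \<open>z \<notin> Y\<close>] prod_apply1[OF assms True] assms(3) by (simp add: Int_commute)
  next
    case False
    thus ?thesis
    proof (cases "z \<in> Y")
      case True
      thus ?thesis using prod_apply1[OF assms(2,1) _ True] prod_apply2[OF assms \<open>z \<notin> X\<close>] assms(3) by (simp add: Int_commute)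
    next
      case False
      thus ?thesis using \<open>z \<notin> X\<close> permutes_not_in[OF assms(1)] permutes_not_in[OF assms(2)] by simp
    qed
  qed
  thus "(a \<circ> b) z = (b \<circ> a) z" by simp
qed

lemma prod_inj:
  assumes "a permutes X" "b permutes Y" "a' permutes X" "b' permutes Y" "X \<inter> Y = {}"
    and eq: "a \<circ> b = a' \<circ> b'"
  shows "a = a' \<and> b = b'"
proof
  show "a = a'"
  proof
    fix z show "a z = a' z"
    proof (cases "z \<in> X")
      case True
      thus ?thesis using prod_apply1[OF assms(1,2,5)] prod_apply1[OF assms(3,4,5)] eq by metis
    next
      case False
      thus ?thesis using permutes_not_in[OF assms(1)] permutes_not_in[OF assms(3)] by simp
    qed
  qed
  show "b = b'"
  proof
    fix z show "b z = b' z"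
    proof (cases "z \<in> Y")
      case True
      hence "z \<notin> X" using assms(5) by auto
      thus ?thesis using prod_apply2[OF assms(1,2,5)] prod_apply2[OF assms(3,4,5)] eq by metis
    next
      case False
      thus ?thesis using permutes_not_in[OF assms(2)] permutes_not_in[OF assms(4)] by simp
    qed
  qed
qed

lemma meet_prod:
  assumes "a permutes X" "b permutes Y" "a' permutes X" "b' permutes Y" "X \<inter> Y = {}"
  shows "meet (X \<union> Y) (a \<circ> b) (a' \<circ> b') \<longleftrightarrow> meet X a a' \<or> meet Y b b'"
proof
  assume "meet (X \<union> Y) (a \<circ> b) (a' \<circ> b')"
  then obtain z where z: "z \<in> X \<union> Y" "(a \<circ> b) z = (a' \<circ> b') z" unfolding meet_def by auto
  show "meet X a a' \<or> meet Y b b'"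
  proof (cases "z \<in> X")
    case True
    thus ?thesis using z prod_apply1[OF assms(1,2,5)] prod_apply1[OF assms(3,4,5)] unfolding meet_def by metis
  next
    case False
    hence "z \<in> Y" using z by auto
    thus ?thesis using z False prod_apply2[OF assms(1,2,5)] prod_apply2[OF assms(3,4,5)] unfolding meet_def by metis
  qed
next
  assume "meet X a a' \<or> meet Y b b'"
  thus "meet (X \<union> Y) (a \<circ> b) (a' \<circ> b')"
  proof
    assume "meet X a a'"
    then obtain z where "z \<in> X" "a z = a' z" unfolding meet_def by auto
    thus ?thesis using prod_apply1[OF assms(1,2,5)] prod_apply1[OF assms(3,4,5)] unfolding meet_def by (metis UnI1)
  next
    assume "meet Y b b'"
    then obtain z where z: "z \<in> Y" "b z = b' z" unfolding meet_def by auto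
    hence "z \<notin> X" using assms(5) by auto
    thus ?thesis using z prod_apply2[OF assms(1,2,5)] prod_apply2[OF assms(3,4,5)] unfolding meet_def by (metis UnI2)
  qed
qed

lemma prod_group:
  assumes grpA: "perm_group_on X A" and grpB: "perm_group_on Y B" and disj: "X \<inter> Y = {}"
  shows "perm_group_on (X \<union> Y) (prodset A B)"
proof -
  have pA: "\<And>g. g \<in> A \<Longrightarrow> g permutes X" using grpA unfolding perm_group_on_def by auto
  have pB: "\<And>g. g \<in> B \<Longrightarrow> g permutes Y" using grpB unfolding perm_group_on_def by auto
  have perm: "\<forall>g\<in>prodset A B. g permutes (X \<union> Y)"
  proof
    fix g assume "g \<in> prodset A B"
    then obtain a b where "a \<in> A" "b \<in> B" "g = a \<circ> b" unfolding prodset_def by auto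
    thus "g permutes (X \<union> Y)"
      using permutes_compose[OF permutes_subset[OF pB] permutes_subset[OF pA]] by auto
  qed
  have idp: "id \<in> prodset A B"
  proof -
    have "id \<in> A" "id \<in> B" using grpA grpB unfolding perm_group_on_def by auto
    moreover have "id = id \<circ> id" by simp
    ultimately show ?thesis unfolding prodset_def by blast
  qed
  have cl: "\<forall>g\<in>prodset A B. \<forall>h\<in>prodset A B. g \<circ> h \<in> prodset A B"
  proof (intro ballI)
    fix g h assume "g \<in> prodset A B" "h \<in> prodset A B"
    then obtain a b a' b' where ab: "a \<in> A" "b \<in> B" "g = a \<circ> b" "a' \<in> A" "b' \<in> B" "h = a' \<circ> b'"
      unfolding prodset_def by auto
    have "b \<circ> a' = a' \<circ> b" using prod_commute[OF pA[OF ab(4)] pB[OF ab(2)] disj] by simp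
    have "g \<circ> h = a \<circ> (b \<circ> a') \<circ> b'" using ab by (simp add: comp_assoc)
    also have "\<dots> = a \<circ> (a' \<circ> b) \<circ> b'" using \<open>b \<circ> a' = a' \<circ> b\<close> by simp
    finally have "g \<circ> h = (a \<circ> a') \<circ> (b \<circ> b')" by (simp add: comp_assoc)
    moreover have "a \<circ> a' \<in> A" "b \<circ> b' \<in> B" using ab grpA grpB unfolding perm_group_on_def by auto
    ultimately show "g \<circ> h \<in> prodset A B" unfolding prodset_def by blast
  qed
  have iv: "\<forall>g\<in>prodset A B. inv g \<in> prodset A B"
  proof
    fix g assume "g \<in> prodset A B"
    then obtain a b where ab: "a \<in> A" "b \<in> B" "g = a \<circ> b" unfolding prodset_def by auto
    have "inv g = inv b \<circ> inv a" using ab(3) o_inv_distrib[OF permutes_bij[OF pA[OF ab(1)]] permutes_bij[OF pB[OF ab(2)]]] by simp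
    also have "\<dots> = inv a \<circ> inv b"
      using prod_commute[OF permutes_inv[OF pA[OF ab(1)]] permutes_inv[OF pB[OF ab(2)]] disj] by simp
    finally show "inv g \<in> prodset A B"
      using ab grpA grpB unfolding perm_group_on_def prodset_def by blast
  qed
  show ?thesis unfolding perm_group_on_def using perm idp cl iv by blast
qed

lemma stab_prod1:
  assumes grpA: "perm_group_on X A" and grpB: "perm_group_on Y B" and disj: "X \<inter> Y = {}"
    and finB: "finite B" and x0: "x0 \<in> X"
  shows "card (stabilizer (prodset A B) x0) = card (stabilizer A x0) * card B"
proof -
  have pA: "\<And>g. g \<in> A \<Longrightarrow> g permutes X" using grpA unfolding perm_group_on_def by auto
  have pB: "\<And>g. g \<in> B \<Longrightarrow> g permutes Y" using grpB unfolding perm_group_on_def by auto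
  have eq: "stabilizer (prodset A B) x0 = (\<lambda>(a,b). a \<circ> b) ` (stabilizer A x0 \<times> B)"
  proof (rule set_eqI)
    fix g
    show "g \<in> stabilizer (prodset A B) x0 \<longleftrightarrow> g \<in> (\<lambda>(a,b). a \<circ> b) ` (stabilizer A x0 \<times> B)"
    proof
      assume "g \<in> stabilizer (prodset A B) x0"
      then obtain a b where ab: "a \<in> A" "b \<in> B" "g = a \<circ> b" "g x0 = x0"
        unfolding stabilizer_def prodset_def by auto
      have "(a \<circ> b) x0 = a x0" using prod_apply1[OF pA[OF ab(1)] pB[OF ab(2)] disj x0] .
      hence "a x0 = x0" using ab by simp
      thus "g \<in> (\<lambda>(a,b). a \<circ> b) ` (stabilizer A x0 \<times> B)"
        using ab unfolding stabilizer_def by force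
    next
      assume "g \<in> (\<lambda>(a,b). a \<circ> b) ` (stabilizer A x0 \<times> B)"
      then obtain a b where ab: "a \<in> A" "b \<in> B" "g = a \<circ> b" "a x0 = x0"
        unfolding stabilizer_def by auto
      have "(a \<circ> b) x0 = a x0" using prod_apply1[OF pA[OF ab(1)] pB[OF ab(2)] disj x0] .
      hence "g x0 = x0" using ab by simp
      thus "g \<in> stabilizer (prodset A B) x0" using ab unfolding stabilizer_def prodset_def by blast
    qed
  qed
  have inj: "inj_on (\<lambda>(a,b). a \<circ> b) (stabilizer A x0 \<times> B)" (is "inj_on _ ?D")
  proof (rule inj_onI)
    fix u v assume uv: "u \<in> ?D" "v \<in> ?D" "(\<lambda>(a,b). a \<circ> b) u = (\<lambda>(a,b). a \<circ> b) v"
    obtain a b a' b' where e: "u = (a,b)" "v = (a',b')" by force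
    have "a \<in> A" "b \<in> B" "a' \<in> A" "b' \<in> B" using uv e unfolding stabilizer_def by auto
    thus "u = v" using prod_inj[OF pA pB pA pB disj] uv e by auto
  qed
  show ?thesis unfolding eq card_image[OF inj] card_cartesian_product ..
qed

lemma stab_prod2:
  assumes grpA: "perm_group_on X A" and grpB: "perm_group_on Y B" and disj: "X \<inter> Y = {}"
    and finA: "finite A" and y0: "y0 \<in> Y"
  shows "card (stabilizer (prodset A B) y0) = card A * card (stabilizer B y0)"
proof -
  have pA: "\<And>g. g \<in> A \<Longrightarrow> g permutes X" using grpA unfolding perm_group_on_def by auto
  have pB: "\<And>g. g \<in> B \<Longrightarrow> g permutes Y" using grpB unfolding perm_group_on_def by auto
  have y0X: "y0 \<notin> X" using y0 disj by auto
  have eq: "stabilizer (prodset A B) y0 = (\<lambda>(a,b). a \<circ> b) ` (A \<times> stabilizer B y0)"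
  proof (rule set_eqI)
    fix g
    show "g \<in> stabilizer (prodset A B) y0 \<longleftrightarrow> g \<in> (\<lambda>(a,b). a \<circ> b) ` (A \<times> stabilizer B y0)"
    proof
      assume "g \<in> stabilizer (prodset A B) y0"
      then obtain a b where ab: "a \<in> A" "b \<in> B" "g = a \<circ> b" "g y0 = y0"
        unfolding stabilizer_def prodset_def by auto
      have "(a \<circ> b) y0 = b y0" using prod_apply2[OF pA[OF ab(1)] pB[OF ab(2)] disj y0X] .
      hence "b y0 = y0" using ab by simp
      thus "g \<in> (\<lambda>(a,b). a \<circ> b) ` (A \<times> stabilizer B y0)"
        using ab unfolding stabilizer_def by force
    next
      assume "g \<in> (\<lambda>(a,b). a \<circ> b) ` (A \<times> stabilizer B y0)"
      then obtain a b where ab: "a \<in> A" "b \<in> B" "g = a \<circ> b" "b y0 = y0"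
        unfolding stabilizer_def by auto
      have "(a \<circ> b) y0 = b y0" using prod_apply2[OF pA[OF ab(1)] pB[OF ab(2)] disj y0X] .
      hence "g y0 = y0" using ab by simp
      thus "g \<in> stabilizer (prodset A B) y0" using ab unfolding stabilizer_def prodset_def by blast
    qed
  qed
  have inj: "inj_on (\<lambda>(a,b). a \<circ> b) (A \<times> stabilizer B y0)" (is "inj_on _ ?D")
  proof (rule inj_onI)
    fix u v assume uv: "u \<in> ?D" "v \<in> ?D" "(\<lambda>(a,b). a \<circ> b) u = (\<lambda>(a,b). a \<circ> b) v"
    obtain a b a' b' where e: "u = (a,b)" "v = (a',b')" by force
    have "a \<in> A" "b \<in> B" "a' \<in> A" "b' \<in> B" using uv e unfolding stabilizer_def by auto
    thus "u = v" using prod_inj[OF pA pB pA pB disj] uv e by auto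
  qed
  show ?thesis unfolding eq card_image[OF inj] card_cartesian_product ..
qed



lemma two_factor_EKR:
  assumes finX: "finite X" and finY: "finite Y" and neX: "X \<noteq> {}" and neY: "Y \<noteq> {}"
    and disj: "X \<inter> Y = {}" and grpA: "perm_group_on X A" and grpB: "perm_group_on Y B"
    and ekrA: "EKR X A" and ekrB: "EKR Y B"
  shows "EKR (X \<union> Y) (prodset A B)"
  unfolding EKR_def
proof (intro allI impI)
  fix S assume SS: "S \<subseteq> prodset A B \<and> intersecting (X \<union> Y) S"
  have pA: "\<And>g. g \<in> A \<Longrightarrow> g permutes X" using grpA unfolding perm_group_on_def by auto
  have pB: "\<And>g. g \<in> B \<Longrightarrow> g permutes Y" using grpB unfolding perm_group_on_def by auto
  have finA: "finite A" using perm_group_finite[OF grpA finX] .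
  have finB: "finite B" using perm_group_finite[OF grpB finY] .
  define sA where "sA = Max ((\<lambda>x. card (stabilizer A x)) ` X)"
  define sB where "sB = Max ((\<lambda>x. card (stabilizer B x)) ` Y)"
  define S' where "S' = {(a,b) \<in> A \<times> B. a \<circ> b \<in> S}"
  have S'AB: "S' \<subseteq> A \<times> B" unfolding S'_def by auto
  have eqS: "S = (\<lambda>(a,b). a \<circ> b) ` S'" using SS unfolding S'_def prodset_def by force
  have inj: "inj_on (\<lambda>(a,b). a \<circ> b) S'"
  proof (rule inj_onI)
    fix u v assume uv: "u \<in> S'" "v \<in> S'" "(\<lambda>(a,b). a \<circ> b) u = (\<lambda>(a,b). a \<circ> b) v"
    obtain a b a' b' where e: "u = (a,b)" "v = (a',b')" by force
    have "a \<in> A" "b \<in> B" "a' \<in> A" "b' \<in> B" using uv e S'AB by auto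
    thus "u = v" using prod_inj[OF pA pB pA pB disj] uv e by auto
  qed
  have cS: "card S = card S'" using eqS card_image[OF inj] by simp
  have grpP: "perm_group_on (X \<union> Y) (prodset A B)" by (rule prod_group[OF grpA grpB disj])
  have Sperm: "\<forall>g\<in>S. g permutes (X \<union> Y)" using SS grpP unfolding perm_group_on_def by auto
  have interS: "\<forall>p\<in>S. \<forall>t\<in>S. meet (X \<union> Y) p t" using SS intersecting_meet[OF Sperm] by auto
  have prp: "meet X a a' \<or> meet Y b b'" if "(a,b) \<in> S'" "(a',b') \<in> S'" for a b a' b'
  proof -
    have "a \<in> A" "b \<in> B" "a' \<in> A" "b' \<in> B" "a \<circ> b \<in> S" "a' \<circ> b' \<in> S" using that unfolding S'_def by auto
    thus ?thesis using interS meet_prod[OF pA pB pA pB disj] by blast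
  qed
  have nbA: "card I * card A \<le> sA * (card I + card {a'\<in>A. \<exists>a\<in>I. \<not> meet X a a'})"
    if "I \<subseteq> A" "\<forall>a\<in>I. \<forall>a'\<in>I. meet X a a'" for I
    unfolding sA_def by (rule neighbor[OF grpA ekrA finX neX that])
  have nbB: "card I * card B \<le> sB * (card I + card {a'\<in>B. \<exists>a\<in>I. \<not> meet Y a a'})"
    if "I \<subseteq> B" "\<forall>a\<in>I. \<forall>a'\<in>I. meet Y a a'" for I
    unfolding sB_def by (rule neighbor[OF grpB ekrB finY neY that])
  have "sA \<in> (\<lambda>x. card (stabilizer A x)) ` X" unfolding sA_def using finX neX by (intro Max_in) auto
  then obtain x0 where x0: "x0 \<in> X" "card (stabilizer A x0) = sA" by auto
  have "sB \<in> (\<lambda>x. card (stabilizer B x)) ` Y" unfolding sB_def using finY neY by (intro Max_in) auto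
  then obtain y0 where y0: "y0 \<in> Y" "card (stabilizer B y0) = sB" by auto
  have sAl: "sA \<le> card A" using x0(2) finA card_mono[of A "stabilizer A x0"] unfolding stabilizer_def by auto
  have sBl: "sB \<le> card B" using y0(2) finB card_mono[of B "stabilizer B y0"] unfolding stabilizer_def by auto
  have c1: "card S' \<le> max (sA * card B) (sB * card A)"
    by (rule prod_count[OF finA finB S'AB meet_sym meet_sym prp nbA nbB sAl sBl]) auto
  define F where "F = (\<lambda>x. card (stabilizer (prodset A B) x)) ` (X \<union> Y)"
  have finF: "finite F" unfolding F_def using finX finY by auto
  have "sA * card B \<in> F" unfolding F_def using stab_prod1[OF grpA grpB disj finB x0(1)] x0 by force
  hence m1: "sA * card B \<le> Max F" using finF by auto
  have "sB * card A \<in> F" unfolding F_def using stab_prod2[OF grpA grpB disj finA y0(1)] y0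
    by (metis UnI2 image_eqI mult.commute)
  hence m2: "sB * card A \<le> Max F" using finF by auto
  show "card S \<le> Max ((\<lambda>x. card (stabilizer (prodset A B) x)) ` (X \<union> Y))"
    using c1 m1 m2 cS unfolding F_def by linarith
qed

lemma foldr_comp: "foldr (\<circ>) xs c = foldr (\<circ>) xs id \<circ> c"
  by (induction xs) (auto simp: comp_assoc)

lemma dprod_0: "internal_dprod 0 G = {id}"
  unfolding internal_dprod_def by auto

lemma dprod_Suc: "internal_dprod (Suc k) G = prodset (internal_dprod k G) (G k)"
proof (rule set_eqI, rule iffI)
  fix g assume "g \<in> internal_dprod (Suc k) G"
  then obtain f where f: "g = foldr (\<circ>) (map f [0..<Suc k]) id" "\<forall>i<Suc k. f i \<in> G i"
    unfolding internal_dprod_def by auto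
  have "g = foldr (\<circ>) (map f [0..<k]) id \<circ> f k" using f(1) foldr_comp[of "map f [0..<k]" "f k"] by simp
  moreover have "foldr (\<circ>) (map f [0..<k]) id \<in> internal_dprod k G" using f(2) unfolding internal_dprod_def by auto
  moreover have "f k \<in> G k" using f(2) by auto
  ultimately show "g \<in> prodset (internal_dprod k G) (G k)" unfolding prodset_def by blast
next
  fix g assume "g \<in> prodset (internal_dprod k G) (G k)"
  then obtain p q f where pq: "g = p \<circ> q" "q \<in> G k" "p = foldr (\<circ>) (map f [0..<k]) id" "\<forall>i<k. f i \<in> G i"
    unfolding prodset_def internal_dprod_def by auto
  define f' where "f' = f(k := q)"
  have "map f' [0..<k] = map f [0..<k]" unfolding f'_def by auto
  hence "g = foldr (\<circ>) (map f' [0..<Suc k]) id" using pq foldr_comp[of "map f [0..<k]" q]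
    unfolding f'_def by simp
  moreover have "\<forall>i<Suc k. f' i \<in> G i" using pq unfolding f'_def by (auto simp: less_Suc_eq)
  ultimately show "g \<in> internal_dprod (Suc k) G" unfolding internal_dprod_def by blast
qed

lemma prodset_id: "prodset {id} B = B"
  unfolding prodset_def by auto


theorem theorem18:
  fixes n k :: nat
    and Om :: "nat \<Rightarrow> nat set"
    and G :: "nat \<Rightarrow> (nat \<Rightarrow> nat) set"
  assumes nonempty: "\<And>i. i < k \<Longrightarrow> Om i \<noteq> {}"
    and sub: "\<And>i. i < k \<Longrightarrow> Om i \<subseteq> {1..n}"
    and disj: "\<And>i j. i < k \<Longrightarrow> j < k \<Longrightarrow> i \<noteq> j \<Longrightarrow> Om i \<inter> Om j = {}"
    and grp: "\<And>i. i < k \<Longrightarrow> perm_group_on (Om i) (G i)"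
    and ekr: "\<And>i. i < k \<Longrightarrow> EKR (Om i) (G i)"
  shows "EKR (\<Union>i<k. Om i) (internal_dprod k G)"
proof -
  have main: "m \<le> k \<Longrightarrow> perm_group_on (\<Union>i<m. Om i) (internal_dprod m G) \<and> EKR (\<Union>i<m. Om i) (internal_dprod m G)" for m
  proof (induction m)
    case 0
    have g: "perm_group_on {} {id :: nat \<Rightarrow> nat}" unfolding perm_group_on_def by (auto simp: permutes_id)
    have e: "EKR {} {id :: nat \<Rightarrow> nat}" unfolding EKR_def intersecting_def
    proof (intro allI impI)
      fix S :: "(nat \<Rightarrow> nat) set" assume "S \<subseteq> {id} \<and> (\<forall>p\<in>S. \<forall>t\<in>S. \<exists>x\<in>{}. (p \<circ> inv t) x = x)"
      hence "S = {}" by auto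
      thus "card S \<le> Max ((\<lambda>x. card (stabilizer {id} x)) ` {})" by simp
    qed
    show ?case using g e by (simp add: dprod_0)
  next
    case (Suc m)
    hence mk: "m < k" by simp
    have IH: "perm_group_on (\<Union>i<m. Om i) (internal_dprod m G)" "EKR (\<Union>i<m. Om i) (internal_dprod m G)"
      using Suc by auto
    have U: "(\<Union>i<Suc m. Om i) = (\<Union>i<m. Om i) \<union> Om m" by (auto simp: less_Suc_eq)
    show ?case
    proof (cases "m = 0")
      case True
      have "internal_dprod (Suc m) G = G 0" using True by (simp add: dprod_Suc dprod_0 prodset_id)
      moreover have "(\<Union>i<Suc m. Om i) = Om 0" unfolding U using True by simp
      ultimately show ?thesis using grp ekr mk True by simp
    next
      case False
      define X where "X = (\<Union>i<m. Om i)"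
      have finX: "finite X"
      proof -
        have "X \<subseteq> {1..n}" unfolding X_def
        proof (rule UN_least)
          fix i assume "i \<in> {..<m}"
          hence "i < k" using mk by auto
          thus "Om i \<subseteq> {1..n}" by (rule sub)
        qed
        thus ?thesis using finite_subset by blast
      qed
      have finY: "finite (Om m)" using sub[OF mk] finite_subset by blast
      have neX: "X \<noteq> {}" unfolding X_def using nonempty[of 0] False mk by auto
      have dj: "X \<inter> Om m = {}"
      proof (rule ccontr)
        assume "X \<inter> Om m \<noteq> {}"
        then obtain x i where "i < m" "x \<in> Om i" "x \<in> Om m" unfolding X_def by auto
        moreover have "Om i \<inter> Om m = {}" using disj[of i m] \<open>i < m\<close> mk by auto
        ultimately show False by auto
      qed
      have "perm_group_on (X \<union> Om m) (prodset (internal_dprod m G) (G m))"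
        using prod_group[OF IH(1)[folded X_def] grp[OF mk] dj] .
      moreover have "EKR (X \<union> Om m) (prodset (internal_dprod m G) (G m))"
        using two_factor_EKR[OF finX finY neX nonempty[OF mk] dj IH(1)[folded X_def] grp[OF mk]
                IH(2)[folded X_def] ekr[OF mk]] .
      ultimately show ?thesis unfolding U dprod_Suc X_def by simp
    qed
  qed
  show ?thesis using main[of k] by simp
qed

end
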